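(* For the Byzantine-tolerant algorithm described in the context, under the fair distributed daemon and any Byzantine behaviour: if $\gamma$ is a degree-stabilized configuration such that $I_\gamma$ is not a maximal independent set of the subgraph induced by $V_2\cup I_\gamma$, then the configuration $\gamma'$ reached after two rounds starting from $\gamma$ satisfies $I_\gamma\subsetneq I_{\gamma'}$ with probability at least $\frac{1}{(\Delta+1)e}$.
   Context: Network and model. $G=(V,E)$ is a finite simple undirected graph; $N(u)$ is the open neighbourhood of $u$, $N[u]=N(u)\cup\{u\}$, $\deg(u)=|N(u)|$, $\Delta=\max_{u\in V}\deg(u)$. Nodes are anonymous. Each node holds local variables; a configuration is an assignment of values to all local variables. A rule "guard $\to$ command" is enabled on $u$ in $\gamma$ if its guard (a predicate on the variables of $u$ and its neighbours) holds; its command rewrites only $u$'s variables, possibly randomly. $u$ is activable if some rule is enabled on it. A transition $\gamma\xrightarrow{t}\gamma'$ is given by a nonempty set $t$ of moves $(u,r)$ with $r$ enabled on $u$ in $\gamma$, at most one per node, all executed simultaneously from the values in $\gamma$, with independent random choices. An execution is a sequence of consecutive transitions chosen by a daemon. The fair distributed daemon may choose any such $t$, subject to fairness: no node may remain activable forever without being activated. Probabilities are in the worst case over the daemon's and Byzantine nodes' strategies. Rounds. The rounds of an execution are consecutive segments of transitions: the first round starts at the beginning of the execution, each subsequent round starts immediately after the previous one ends, and the current round ends as soon as every node $u\in V$ has either been activated in at least one transition of the round or been non-activable in at least one configuration of the round. Byzantine nodes. A subset $B\subseteq V$ consists of Byzantine nodes: always activable and, when activated, they may set their variables to arbitrary values.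 $d(u,B)$ is the graph distance from $u$ to $B$ and $V_i=\{u\in V: d(u,B)>i\}$. Algorithm. Each node $u$ has variables $s_u\in\{\bot,\top\}$ and $x_u\in\mathbb{N}$; $Rand(q)$ returns $1$ with probability $q$, else $0$, independently. Non-Byzantine nodes follow the rules: (Refresh) $x_u\neq \deg(u)\ \to\ x_u:=\deg(u)$. (Candidacy?) $x_u=\deg(u)\wedge s_u=\bot\wedge \forall v\in N(u),\ s_v=\bot\ \to$ if $Rand\big(\frac{1}{1+\max\{x_v: v\in N[u]\}}\big)=1$ then $s_u:=\top$. (Withdrawal) $x_u=\deg(u)\wedge s_u=\top\wedge \exists v\in N(u),\ s_v=\top\ \to\ s_u:=\bot$. For a configuration $\gamma$, $I_\gamma=\{u\in V_1: s_u^\gamma=\top \text{ and } \forall v\in N(u),\ s_v^\gamma=\bot\}$. $\gamma$ is degree-stabilized if $x_u^\gamma=\deg(u)$ for every non-Byzantine node $u$. *)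

theory Defs
  imports "HOL-Probability.Probability"
begin

text \<open>The vertex set V is the (finite) universe of the type 'a; the graph is given by a
symmetric irreflexive adjacency relation E.  A configuration is a pair (s, x) with
s u = True meaning s_u = top and s u = False meaning s_u = bot.\<close>

type_synonym 'a cfg = "('a \<Rightarrow> bool) \<times> ('a \<Rightarrow> nat)"

definition nbrs :: "('a \<Rightarrow> 'a \<Rightarrow> bool) \<Rightarrow> 'a \<Rightarrow> 'a set" where
  "nbrs E u = {v. E u v}"

definition deg :: "('a \<Rightarrow> 'a \<Rightarrow> bool) \<Rightarrow> 'a \<Rightarrow> nat" where
  "deg E u = card (nbrs E u)"

definition maxdeg :: "('a::finite \<Rightarrow> 'a \<Rightarrow> bool) \<Rightarrow> nat" where
  "maxdeg E = Max (range (deg E))"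

text \<open>Distance: d(u,B) > i iff no walk of length at most i from u reaches B.\<close>
definition Vset :: "('a \<Rightarrow> 'a \<Rightarrow> bool) \<Rightarrow> 'a set \<Rightarrow> nat \<Rightarrow> 'a set" where
  "Vset E B i = {u. \<forall>b\<in>B. (u, b) \<notin> ({(p, q). E p q}\<^sup>=) ^^ i}"

definition refresh_en :: "('a \<Rightarrow> 'a \<Rightarrow> bool) \<Rightarrow> 'a cfg \<Rightarrow> 'a \<Rightarrow> bool" where
  "refresh_en E \<gamma> u \<longleftrightarrow> snd \<gamma> u \<noteq> deg E u"

definition cand_en :: "('a \<Rightarrow> 'a \<Rightarrow> bool) \<Rightarrow> 'a cfg \<Rightarrow> 'a \<Rightarrow> bool" where
  "cand_en E \<gamma> u \<longleftrightarrow> snd \<gamma> u = deg E u \<and> \<not> fst \<gamma> u \<and> (\<forall>v. E u v \<longrightarrow> \<not> fst \<gamma> v)"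

definition withdraw_en :: "('a \<Rightarrow> 'a \<Rightarrow> bool) \<Rightarrow> 'a cfg \<Rightarrow> 'a \<Rightarrow> bool" where
  "withdraw_en E \<gamma> u \<longleftrightarrow> snd \<gamma> u = deg E u \<and> fst \<gamma> u \<and> (\<exists>v. E u v \<and> fst \<gamma> v)"

definition activable :: "('a \<Rightarrow> 'a \<Rightarrow> bool) \<Rightarrow> 'a set \<Rightarrow> 'a cfg \<Rightarrow> 'a \<Rightarrow> bool" where
  "activable E B \<gamma> u \<longleftrightarrow> u \<in> B \<or> refresh_en E \<gamma> u \<or> cand_en E \<gamma> u \<or> withdraw_en E \<gamma> u"

definition cand_prob :: "('a::finite \<Rightarrow> 'a \<Rightarrow> bool) \<Rightarrow> 'a cfg \<Rightarrow> 'a \<Rightarrow> real" where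
  "cand_prob E \<gamma> u = 1 / (1 + real (Max {snd \<gamma> v | v. v = u \<or> E u v}))"

text \<open>One transition: the nodes of A are activated simultaneously; activated Byzantine nodes
take the values byz u; activated correct nodes execute their (unique) enabled rule; the
Rand call of node u returns 1 iff its coin c u is < the probability parameter.\<close>
definition step :: "('a::finite \<Rightarrow> 'a \<Rightarrow> bool) \<Rightarrow> 'a set \<Rightarrow> 'a cfg \<Rightarrow> 'a set
    \<Rightarrow> ('a \<Rightarrow> bool \<times> nat) \<Rightarrow> ('a \<Rightarrow> real) \<Rightarrow> 'a cfg" where
  "step E B \<gamma> A byz c =
    ((\<lambda>u. if u \<notin> A then fst \<gamma> u
          else if u \<in> B then fst (byz u)
          else if cand_en E \<gamma> u then (c u < cand_prob E \<gamma> u)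
          else if withdraw_en E \<gamma> u then False
          else fst \<gamma> u),
     (\<lambda>u. if u \<notin> A then snd \<gamma> u
          else if u \<in> B then snd (byz u)
          else if refresh_en E \<gamma> u then deg E u
          else snd \<gamma> u))"

text \<open>A (combined daemon + Byzantine) strategy maps the history of configurations
(oldest first) to the set of activated nodes and the values written by Byzantine nodes.\<close>
type_synonym 'a strategy = "'a cfg list \<Rightarrow> 'a set \<times> ('a \<Rightarrow> bool \<times> nat)"

definition valid_strategy :: "('a \<Rightarrow> 'a \<Rightarrow> bool) \<Rightarrow> 'a set \<Rightarrow> 'a strategy \<Rightarrow> bool" where
  "valid_strategy E B \<sigma> \<longleftrightarrow> (\<forall>h. h \<noteq> [] \<longrightarrow>
      fst (\<sigma> h) \<subseteq> {u. activable E B (last h) u} \<and>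
      (fst (\<sigma> h) = {} \<longleftrightarrow> (\<forall>u. \<not> activable E B (last h) u)))"

text \<open>Coins: omega (u, i) is the uniform [0,1] random number used by node u in transition i.\<close>
primrec hist :: "('a::finite \<Rightarrow> 'a \<Rightarrow> bool) \<Rightarrow> 'a set \<Rightarrow> 'a cfg \<Rightarrow> 'a strategy
    \<Rightarrow> ('a \<times> nat \<Rightarrow> real) \<Rightarrow> nat \<Rightarrow> 'a cfg list" where
  "hist E B \<gamma> \<sigma> \<omega> 0 = [\<gamma>]"
| "hist E B \<gamma> \<sigma> \<omega> (Suc i) =
     hist E B \<gamma> \<sigma> \<omega> i @ [step E B (last (hist E B \<gamma> \<sigma> \<omega> i))
        (fst (\<sigma> (hist E B \<gamma> \<sigma> \<omega> i))) (snd (\<sigma> (hist E B \<gamma> \<sigma> \<omega> i))) (\<lambda>u. \<omega> (u, i))]"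

definition cfg_seq :: "('a::finite \<Rightarrow> 'a \<Rightarrow> bool) \<Rightarrow> 'a set \<Rightarrow> 'a cfg \<Rightarrow> 'a strategy
    \<Rightarrow> ('a \<times> nat \<Rightarrow> real) \<Rightarrow> nat \<Rightarrow> 'a cfg" where
  "cfg_seq E B \<gamma> \<sigma> \<omega> i = last (hist E B \<gamma> \<sigma> \<omega> i)"

definition act_seq :: "('a::finite \<Rightarrow> 'a \<Rightarrow> bool) \<Rightarrow> 'a set \<Rightarrow> 'a cfg \<Rightarrow> 'a strategy
    \<Rightarrow> ('a \<times> nat \<Rightarrow> real) \<Rightarrow> nat \<Rightarrow> 'a set" where
  "act_seq E B \<gamma> \<sigma> \<omega> i = fst (\<sigma> (hist E B \<gamma> \<sigma> \<omega> i))"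

definition coin_space :: "('a \<times> nat \<Rightarrow> real) measure" where
  "coin_space = PiM UNIV (\<lambda>_. uniform_measure lborel {0..1})"

definition fair_exec :: "('a \<Rightarrow> 'a \<Rightarrow> bool) \<Rightarrow> 'a set \<Rightarrow> (nat \<Rightarrow> 'a cfg) \<Rightarrow> (nat \<Rightarrow> 'a set) \<Rightarrow> bool" where
  "fair_exec E B c act \<longleftrightarrow>
     (\<forall>u. \<not> (\<exists>n. \<forall>m\<ge>n. activable E B (c m) u \<and> u \<notin> act m))"

definition round_cond :: "('a \<Rightarrow> 'a \<Rightarrow> bool) \<Rightarrow> 'a set \<Rightarrow> (nat \<Rightarrow> 'a cfg) \<Rightarrow> (nat \<Rightarrow> 'a set)
    \<Rightarrow> nat \<Rightarrow> nat \<Rightarrow> bool" where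
  "round_cond E B c act a b \<longleftrightarrow>
     (\<forall>u. (\<exists>i\<in>{a..<b}. u \<in> act i) \<or> (\<exists>i\<in>{a..b}. \<not> activable E B (c i) u))"

text \<open>The round starting at configuration index a consists of transitions a..b-1.\<close>
definition round_end :: "('a \<Rightarrow> 'a \<Rightarrow> bool) \<Rightarrow> 'a set \<Rightarrow> (nat \<Rightarrow> 'a cfg) \<Rightarrow> (nat \<Rightarrow> 'a set)
    \<Rightarrow> nat \<Rightarrow> nat \<Rightarrow> bool" where
  "round_end E B c act a b \<longleftrightarrow>
     a < b \<and> round_cond E B c act a b \<and> (\<forall>b'. a < b' \<and> b' < b \<longrightarrow> \<not> round_cond E B c act a b')"

definition Iset :: "('a \<Rightarrow> 'a \<Rightarrow> bool) \<Rightarrow> 'a set \<Rightarrow> 'a cfg \<Rightarrow> 'a set" where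
  "Iset E B \<gamma> = {u \<in> Vset E B 1. fst \<gamma> u \<and> (\<forall>v. E u v \<longrightarrow> \<not> fst \<gamma> v)}"

definition deg_stabilized :: "('a \<Rightarrow> 'a \<Rightarrow> bool) \<Rightarrow> 'a set \<Rightarrow> 'a cfg \<Rightarrow> bool" where
  "deg_stabilized E B \<gamma> \<longleftrightarrow> (\<forall>u. u \<notin> B \<longrightarrow> snd \<gamma> u = deg E u)"

definition independent_in :: "('a \<Rightarrow> 'a \<Rightarrow> bool) \<Rightarrow> 'a set \<Rightarrow> 'a set \<Rightarrow> bool" where
  "independent_in E H S \<longleftrightarrow> S \<subseteq> H \<and> (\<forall>u\<in>S. \<forall>v\<in>S. \<not> E u v)"

definition maximal_indep_in :: "('a \<Rightarrow> 'a \<Rightarrow> bool) \<Rightarrow> 'a set \<Rightarrow> 'a set \<Rightarrow> bool" where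
  "maximal_indep_in E H S \<longleftrightarrow> independent_in E H S \<and>
     (\<forall>w\<in>H - S. \<not> independent_in E H (insert w S))"

end

theory Submission
  imports Defs
begin


abbreviation U :: "real measure" where "U \<equiv> uniform_measure lborel {0..1::real}"

lemma prob_U: "prob_space U"
  by (intro prob_space_uniform_measure) auto

lemma hist_len: "length (hist E B \<gamma> \<sigma> \<omega> i) = Suc i"
  by (induction i) auto

lemma hist_ne: "hist E B \<gamma> \<sigma> \<omega> i \<noteq> []"
  using hist_len[of E B \<gamma> \<sigma> \<omega> i] by auto

lemma cfg_0: "cfg_seq E B \<gamma> \<sigma> \<omega> 0 = \<gamma>"
  by (simp add: cfg_seq_def)

lemma cfg_Suc: "cfg_seq E B \<gamma> \<sigma> \<omega> (Suc i) =
  step E B (cfg_seq E B \<gamma> \<sigma> \<omega> i) (act_seq E B \<gamma> \<sigma> \<omega> i) (snd (\<sigma> (hist E B \<gamma> \<sigma> \<omega> i))) (\<lambda>u. \<omega> (u, i))"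
  by (simp add: cfg_seq_def act_seq_def)

lemma hist_take: "j \<le> i \<Longrightarrow> hist E B \<gamma> \<sigma> \<omega> j = take (Suc j) (hist E B \<gamma> \<sigma> \<omega> i)"
proof (induction i)
  case 0 then show ?case by simp
next
  case (Suc i)
  show ?case
  proof (cases "j = Suc i")
    case True then show ?thesis using hist_len[of E B \<gamma> \<sigma> \<omega> "Suc i"] by simp
  next
    case False then have "j \<le> i" using Suc by simp
    then show ?thesis using Suc hist_len[of E B \<gamma> \<sigma> \<omega> i] by simp
  qed
qed

lemma hist_cong: "(\<And>u j. j < i \<Longrightarrow> \<omega> (u, j) = \<omega>' (u, j)) \<Longrightarrow> hist E B \<gamma> \<sigma> \<omega> i = hist E B \<gamma> \<sigma> \<omega>' i"
proof (induction i)
  case 0 then show ?case by simp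
next
  case (Suc i)
  then have "hist E B \<gamma> \<sigma> \<omega> i = hist E B \<gamma> \<sigma> \<omega>' i" by simp
  moreover have "(\<lambda>u. \<omega> (u, i)) = (\<lambda>u. \<omega>' (u, i))" using Suc.prems by auto
  ultimately show ?case by simp
qed

definition stepb :: "('a::finite \<Rightarrow> 'a \<Rightarrow> bool) \<Rightarrow> 'a set \<Rightarrow> 'a cfg \<Rightarrow> 'a set
    \<Rightarrow> ('a \<Rightarrow> bool \<times> nat) \<Rightarrow> ('a \<Rightarrow> bool) \<Rightarrow> 'a cfg" where
  "stepb E B \<gamma> A byz r =
    ((\<lambda>u. if u \<notin> A then fst \<gamma> u
          else if u \<in> B then fst (byz u)
          else if cand_en E \<gamma> u then r u
          else if withdraw_en E \<gamma> u then False
          else fst \<gamma> u),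
     (\<lambda>u. if u \<notin> A then snd \<gamma> u
          else if u \<in> B then snd (byz u)
          else if refresh_en E \<gamma> u then deg E u
          else snd \<gamma> u))"

lemma step_stepb: "step E B g A byz c = stepb E B g A byz (\<lambda>u. c u < cand_prob E g u)"
  unfolding step_def stepb_def by simp

lemma coin_meas:
  assumes "UNIV \<times> {i} \<subseteq> J"
  shows "(\<lambda>\<omega>. \<lambda>u::'a::finite. \<omega> (u, i) < (p u :: real)) \<in> measurable (PiM J (\<lambda>_. U)) (count_space UNIV)"
proof (subst measurable_count_space_eq2_countable, safe)
  fix a :: "'a \<Rightarrow> bool"
  have "(\<lambda>\<omega>. \<lambda>u. \<omega> (u, i) < p u) -` {a} \<inter> space (PiM J (\<lambda>_. U)) =
        {\<omega> \<in> space (PiM J (\<lambda>_. U)). \<forall>u. (\<omega> (u, i) < p u) = a u}"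
    by (auto simp: fun_eq_iff)
  also have "\<dots> \<in> sets (PiM J (\<lambda>_. U))"
  proof -
    have m: "(\<lambda>\<omega>. \<omega> (u, i)) \<in> borel_measurable (PiM J (\<lambda>_. U))" for u
    proof -
      have "(\<lambda>\<omega>. \<omega> (u, i)) \<in> measurable (PiM J (\<lambda>_. U)) U"
        using assms by (intro measurable_component_singleton) auto
      moreover have "measurable (PiM J (\<lambda>_. U)) U = measurable (PiM J (\<lambda>_. U)) (borel::real measure)"
        by (rule measurable_cong_sets) auto
      ultimately show ?thesis by simp
    qed
    have "Measurable.pred (PiM J (\<lambda>_. U)) (\<lambda>\<omega>. (\<omega> (u, i) < p u) = a u)" for u
      using m[of u] by measurable
    then have "Measurable.pred (PiM J (\<lambda>_. U)) (\<lambda>\<omega>. \<forall>u. (\<omega> (u, i) < p u) = a u)"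
      by (intro pred_intros_countable) auto
    then show ?thesis by (simp add: pred_def)
  qed
  finally show "(\<lambda>\<omega>. \<lambda>u. \<omega> (u, i) < p u) -` {a} \<inter> space (PiM J (\<lambda>_. U)) \<in> sets (PiM J (\<lambda>_. U))" .
qed simp

lemma hist_meas:
  assumes "UNIV \<times> {..<i} \<subseteq> J"
  shows "(\<lambda>\<omega>. hist E B \<gamma> \<sigma> \<omega> i) \<in> measurable (PiM J (\<lambda>_. U)) (count_space UNIV)"
  using assms
proof (induction i)
  case 0 then show ?case by simp
next
  case (Suc i)
  have "UNIV \<times> {..<i} \<subseteq> J" using Suc.prems by auto
  then have IH: "(\<lambda>\<omega>. hist E B \<gamma> \<sigma> \<omega> i) \<in> measurable (PiM J (\<lambda>_. U)) (count_space UNIV)"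
    by (rule Suc.IH)
  have "(\<lambda>\<omega>. (\<lambda>h. h @ [stepb E B (last h) (fst (\<sigma> h)) (snd (\<sigma> h)) (\<lambda>u. \<omega> (u, i) < cand_prob E (last h) u)])
         (hist E B \<gamma> \<sigma> \<omega> i)) \<in> measurable (PiM J (\<lambda>_. U)) (count_space UNIV)"
  proof (rule measurable_compose_countable'[where I=UNIV, OF _ IH])
    fix h :: "'a cfg list"
    have "(\<lambda>\<omega>. \<lambda>u. \<omega> (u, i) < cand_prob E (last h) u) \<in> measurable (PiM J (\<lambda>_. U)) (count_space UNIV)"
      using Suc.prems by (intro coin_meas) auto
    then show "(\<lambda>\<omega>. h @ [stepb E B (last h) (fst (\<sigma> h)) (snd (\<sigma> h)) (\<lambda>u. \<omega> (u, i) < cand_prob E (last h) u)])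
      \<in> measurable (PiM J (\<lambda>_. U)) (count_space UNIV)"
      by (rule measurable_compose[where f="\<lambda>\<omega>. \<lambda>u. \<omega> (u, i) < cand_prob E (last h) u"]) simp
  qed simp
  then show ?case by (simp only: hist.simps step_stepb)
qed


lemma V1_iff: "u \<in> Vset E B 1 \<longleftrightarrow> (\<forall>b\<in>B. u \<noteq> b \<and> \<not> E u b)"
  unfolding Vset_def by auto

lemma V2_nbr:
  assumes "w \<in> Vset E B 2" "u = w \<or> E w u"
  shows "u \<in> Vset E B 1"
proof -
  { fix b assume b: "b \<in> B" "u = b \<or> E u b"
    let ?R = "{(p, q). E p q}\<^sup>="
    have "(w, u) \<in> ?R" "(u, b) \<in> ?R" using assms(2) b(2) by auto
    then have "(w, b) \<in> ?R ^^ 2" by (metis numeral_2_eq_2 relpow_0_I relpow_Suc_I)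
    with assms(1) b(1) have False unfolding Vset_def by auto }
  then show ?thesis unfolding V1_iff by auto
qed

lemma V1_notB: "u \<in> Vset E B 1 \<Longrightarrow> u \<notin> B"
  unfolding V1_iff by auto

lemma V1_nbr_notB: "u \<in> Vset E B 1 \<Longrightarrow> E u v \<Longrightarrow> v \<notin> B"
  unfolding V1_iff by auto

lemma stab_step:
  assumes "deg_stabilized E B g"
  shows "deg_stabilized E B (step E B g A byz co)"
  using assms unfolding deg_stabilized_def step_def refresh_en_def by auto

lemma activable_iff:
  assumes "deg_stabilized E B g" "u \<notin> B"
  shows "activable E B g u \<longleftrightarrow> cand_en E g u \<or> withdraw_en E g u"
  using assms unfolding deg_stabilized_def activable_def refresh_en_def by auto

lemma step_act_off:
  assumes "deg_stabilized E B g" "u \<notin> B" "u \<in> A" "\<not> cand_en E g u" "activable E B g u"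
  shows "\<not> fst (step E B g A byz co) u"
  using assms activable_iff[OF assms(1,2)] unfolding step_def by auto

lemma step_mono:
  assumes "u \<notin> B" "u \<in> A \<longrightarrow> \<not> cand_en E g u" "fst (step E B g A byz co) u"
  shows "fst g u"
  using assms unfolding step_def by (auto split: if_splits)

lemma Iset_step:
  assumes sym: "\<forall>u v. E u v \<longleftrightarrow> E v u" and st: "deg_stabilized E B g"
    and u: "u \<in> Iset E B g"
  shows "u \<in> Iset E B (step E B g A byz co)"
proof -
  have uV: "u \<in> Vset E B 1" and su: "fst g u" and nb: "\<forall>v. E u v \<longrightarrow> \<not> fst g v"
    using u unfolding Iset_def by auto
  have uB: "u \<notin> B" using V1_notB[OF uV] .
  have "fst (step E B g A byz co) u"
    using su nb uB unfolding step_def cand_en_def withdraw_en_def by auto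
  moreover have "\<not> fst (step E B g A byz co) v" if "E u v" for v
  proof -
    have vB: "v \<notin> B" using V1_nbr_notB[OF uV that] .
    have "\<not> cand_en E g v" using su sym that unfolding cand_en_def by auto
    moreover have "\<not> withdraw_en E g v" using nb that unfolding withdraw_en_def by auto
    ultimately show ?thesis using nb that vB unfolding step_def by auto
  qed
  ultimately show ?thesis using uV unfolding Iset_def by auto
qed

lemma success_step:
  assumes sym: "\<forall>u v. E u v \<longleftrightarrow> E v u" and st: "deg_stabilized E B g"
    and uV: "u \<in> Vset E B 1" and uA: "u \<in> A" and cu: "cand_en E g u"
    and win: "co u < cand_prob E g u"
    and lose: "\<forall>v. E u v \<and> v \<in> A \<and> cand_en E g v \<longrightarrow> \<not> co v < cand_prob E g v"
  shows "u \<in> Iset E B (step E B g A byz co)"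
proof -
  have uB: "u \<notin> B" using V1_notB[OF uV] .
  have "fst (step E B g A byz co) u" using uB uA cu win unfolding step_def by auto
  moreover have "\<not> fst (step E B g A byz co) v" if "E u v" for v
  proof -
    have vB: "v \<notin> B" using V1_nbr_notB[OF uV that] .
    have sv: "\<not> fst g v" using cu that unfolding cand_en_def by auto
    have "\<not> withdraw_en E g v" using sv unfolding withdraw_en_def by auto
    then show ?thesis using sv vB lose that unfolding step_def by auto
  qed
  ultimately show ?thesis using uV unfolding Iset_def by auto
qed

locale run =
  fixes E :: "'a::finite \<Rightarrow> 'a \<Rightarrow> bool" and B :: "'a set" and c :: "nat \<Rightarrow> 'a cfg"
    and act :: "nat \<Rightarrow> 'a set" and byz :: "nat \<Rightarrow> 'a \<Rightarrow> bool \<times> nat" and co :: "nat \<Rightarrow> 'a \<Rightarrow> real"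
  assumes sym: "\<forall>u v. E u v \<longleftrightarrow> E v u"
    and cS: "\<And>i. c (Suc i) = step E B (c i) (act i) (byz i) (co i)"
    and actv: "\<And>i. act i \<subseteq> {u. activable E B (c i) u}"
    and stab0: "deg_stabilized E B (c 0)"
begin

lemma stab: "deg_stabilized E B (c i)"
  by (induction i) (auto simp: cS stab0 stab_step)

lemma Iset_mono: "i \<le> j \<Longrightarrow> u \<in> Iset E B (c i) \<Longrightarrow> u \<in> Iset E B (c j)"
proof (induction j)
  case 0 then show ?case by simp
next
  case (Suc j)
  show ?case
  proof (cases "i = Suc j")
    case True then show ?thesis using Suc by simp
  next
    case False
    then have "u \<in> Iset E B (c j)" using Suc by simp
    then show ?thesis unfolding cS by (rule Iset_step[OF sym stab])
  qed
qed

lemma det_growth: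
  assumes w2: "w \<in> Vset E B 2"
    and r1: "round_cond E B c act 0 b1" and r2: "round_cond E B c act b1 b2" and b12: "b1 \<le> b2"
    and norisk: "\<forall>i<b2. \<forall>u. (u = w \<or> E w u) \<longrightarrow> u \<in> act i \<longrightarrow> \<not> cand_en E (c i) u"
  shows "\<exists>j\<le>b2. \<exists>u. (u = w \<or> E w u) \<and> u \<in> Iset E B (c j)"
proof (rule ccontr)
  assume contra: "\<not> ?thesis"
  let ?N = "{u. u = w \<or> E w u}"
  have NV: "u \<in> Vset E B 1" if "u \<in> ?N" for u using V2_nbr[OF w2] that by auto
  have NB: "u \<notin> B" if "u \<in> ?N" for u using V1_notB[OF NV[OF that]] .
  have nonisol: "\<exists>v. E u v \<and> fst (c j) v" if "u \<in> ?N" "j \<le> b2" "fst (c j) u" for u j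
    using contra that NV[OF that(1)] unfolding Iset_def by auto
  have topact: "activable E B (c j) u" if "u \<in> ?N" "j \<le> b2" "fst (c j) u" for u j
  proof -
    have "withdraw_en E (c j) u"
      using nonisol[OF that] that(3) stab[of j] NB[OF that(1)]
      unfolding withdraw_en_def deg_stabilized_def by auto
    then show ?thesis unfolding activable_def by auto
  qed
  have step1: "fst (c i) u" if "u \<in> ?N" "i < b2" "fst (c (Suc i)) u" for u i
    using step_mono[OF NB[OF that(1)] _ that(3)[unfolded cS]] norisk that(1,2) by auto
  have mono: "fst (c i) u" if "u \<in> ?N" "i \<le> j" "j \<le> b2" "fst (c j) u" for u i j
    using that(2,3,4)
  proof (induction j)
    case 0 then show ?case by simp
  next
    case (Suc j)
    show ?case
    proof (cases "i = Suc j")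
      case True then show ?thesis using Suc by simp
    next
      case False
      then have "fst (c j) u" using step1[OF that(1), of j] Suc.prems by auto
      then show ?thesis using Suc False by auto
    qed
  qed
  have off: "\<not> fst (c (Suc i)) u" if "u \<in> ?N" "i < b2" "u \<in> act i" for u i
  proof -
    have "activable E B (c i) u" using actv[of i] that(3) by auto
    then show ?thesis unfolding cS
      using step_act_off[OF stab NB[OF that(1)] that(3)] norisk that by auto
  qed
  have noact: "u \<notin> act i" if "u \<in> ?N" "i < j" "j \<le> b2" "fst (c j) u" for u i j
  proof
    assume "u \<in> act i"
    then have "\<not> fst (c (Suc i)) u" using off that by auto
    moreover have "fst (c (Suc i)) u" using mono[OF that(1) _ that(3,4), of "Suc i"] that(2) by auto
    ultimately show False by simp
  qed
  have wN: "w \<in> ?N" by simp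
  have wB: "w \<notin> B" using NB[OF wN] .
  from r2 have "(\<exists>i\<in>{b1..<b2}. w \<in> act i) \<or> (\<exists>i\<in>{b1..b2}. \<not> activable E B (c i) w)"
    unfolding round_cond_def by auto
  then show False
  proof
    assume "\<exists>i\<in>{b1..<b2}. w \<in> act i"
    then obtain i2 where i2: "b1 \<le> i2" "i2 < b2" "w \<in> act i2" by auto
    have "activable E B (c i2) w" using actv[of i2] i2(3) by auto
    moreover have "\<not> cand_en E (c i2) w" using norisk i2 by auto
    ultimately have "withdraw_en E (c i2) w" using activable_iff[OF stab wB] by auto
    then have top: "fst (c i2) w" unfolding withdraw_en_def by auto
    from r1 have "(\<exists>i\<in>{0..<b1}. w \<in> act i) \<or> (\<exists>i\<in>{0..b1}. \<not> activable E B (c i) w)"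
      unfolding round_cond_def by auto
    then show False
    proof
      assume "\<exists>i\<in>{0..<b1}. w \<in> act i"
      then obtain i1 where "i1 < b1" "w \<in> act i1" by auto
      then show False using noact[OF wN _ _ top, of i1] i2 by auto
    next
      assume "\<exists>i\<in>{0..b1}. \<not> activable E B (c i) w"
      then obtain i1 where i1: "i1 \<le> b1" "\<not> activable E B (c i1) w" by auto
      have "fst (c i1) w" using mono[OF wN _ _ top, of i1] i1 i2 by auto
      then show False using topact[OF wN _ , of i1] i1 i2 b12 by auto
    qed
  next
    assume "\<exists>i\<in>{b1..b2}. \<not> activable E B (c i) w"
    then obtain i2 where i2: "b1 \<le> i2" "i2 \<le> b2" "\<not> activable E B (c i2) w" by auto
    have "\<not> fst (c i2) w" using topact[OF wN i2(2)] i2(3) by auto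
    then have "\<not> cand_en E (c i2) w" using i2(3) unfolding activable_def by auto
    then obtain v where v: "E w v" "fst (c i2) v"
      using \<open>\<not> fst (c i2) w\<close> stab[of i2] wB unfolding cand_en_def deg_stabilized_def by auto
    have vN: "v \<in> ?N" using v by simp
    from r1 have "(\<exists>i\<in>{0..<b1}. v \<in> act i) \<or> (\<exists>i\<in>{0..b1}. \<not> activable E B (c i) v)"
      unfolding round_cond_def by auto
    then show False
    proof
      assume "\<exists>i\<in>{0..<b1}. v \<in> act i"
      then obtain i1 where "i1 < b1" "v \<in> act i1" by auto
      then show False using noact[OF vN _ i2(2) v(2), of i1] i2 by auto
    next
      assume "\<exists>i\<in>{0..b1}. \<not> activable E B (c i) v"
      then obtain i1 where i1: "i1 \<le> b1" "\<not> activable E B (c i1) v" by auto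
      have "fst (c i1) v" using mono[OF vN _ i2(2) v(2), of i1] i1 i2 by auto
      then show False using topact[OF vN _ , of i1] i1 i2 by auto
    qed
  qed
qed

end


lemma coin_space_eq: "coin_space = PiM UNIV (\<lambda>_. U)"
  by (simp add: coin_space_def)

lemma prob_coin: "prob_space coin_space"
  unfolding coin_space_eq by (intro prob_space_PiM prob_U)

lemma prob_core:
  fixes i :: nat and H :: "'a::finite cfg list set" and Qc :: "'a cfg list \<Rightarrow> ('a \<Rightarrow> real) \<Rightarrow> bool"
    and q :: real
  assumes Qm: "\<And>h. Measurable.pred (PiM (UNIV \<times> {i}) (\<lambda>_. U)) (\<lambda>y. Qc h (\<lambda>u. y (u, i)))"
    and Qb: "\<And>h. h \<in> H \<Longrightarrow> ennreal q \<le> emeasure coin_space {\<omega> \<in> space coin_space. Qc h (\<lambda>u. \<omega> (u, i))}"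
  shows "ennreal q * emeasure coin_space {\<omega> \<in> space coin_space. hist E B \<gamma> \<sigma> \<omega> i \<in> H}
    \<le> emeasure coin_space {\<omega> \<in> space coin_space. hist E B \<gamma> \<sigma> \<omega> i \<in> H \<and> Qc (hist E B \<gamma> \<sigma> \<omega> i) (\<lambda>u. \<omega> (u, i))}"
proof -
  let ?M = "coin_space :: ('a \<times> nat \<Rightarrow> real) measure"
  interpret P: prob_space ?M by (rule prob_coin)
  let ?P = "UNIV \<times> {..<i} :: ('a \<times> nat) set"
  let ?N = "UNIV \<times> {i} :: ('a \<times> nat) set"
  let ?X = "\<lambda>\<omega>. restrict (\<lambda>k. \<omega> k) ?P"
  let ?Y = "\<lambda>\<omega>. restrict (\<lambda>k. \<omega> k) ?N"
  let ?PX = "PiM ?P (\<lambda>_. U)"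
  let ?PY = "PiM ?N (\<lambda>_. U)"
  let ?h = "\<lambda>\<omega>. hist E B \<gamma> \<sigma> \<omega> i"
  have ind0: "P.indep_vars (\<lambda>_. U) (\<lambda>k \<omega>. \<omega> k) UNIV"
  proof (subst P.indep_vars_iff_distr_eq_PiM)
    show "(\<lambda>\<omega>. \<omega> k) \<in> measurable ?M U" for k :: "'a \<times> nat"
      unfolding coin_space_eq by (intro measurable_component_singleton) auto
    have "distr ?M (PiM UNIV (\<lambda>_. U)) (\<lambda>x. \<lambda>k\<in>UNIV. x k) = ?M"
      by (simp add: restrict_UNIV coin_space_eq)
    also have "\<dots> = PiM UNIV (\<lambda>k. distr ?M U (\<lambda>x. x k))"
      unfolding coin_space_eq
      by (intro PiM_cong refl distr_PiM_component[symmetric] prob_U) auto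
    finally show "distr ?M (PiM UNIV (\<lambda>_. U)) (\<lambda>x. \<lambda>k\<in>UNIV. x k) = PiM UNIV (\<lambda>k. distr ?M U (\<lambda>x. x k))" .
  qed simp
  have ind: "P.indep_var ?PX ?X ?PY ?Y"
    by (rule P.indep_var_restrict[OF ind0]) auto
  then have rvX: "?X \<in> measurable ?M ?PX" and rvY: "?Y \<in> measurable ?M ?PY"
    and joint: "distr ?M ?PX ?X \<Otimes>\<^sub>M distr ?M ?PY ?Y = distr ?M (?PX \<Otimes>\<^sub>M ?PY) (\<lambda>x. (?X x, ?Y x))"
    unfolding P.indep_var_distribution_eq by auto
  let ?DX = "distr ?M ?PX ?X"
  let ?DY = "distr ?M ?PY ?Y"
  interpret DY: prob_space ?DY by (rule P.prob_space_distr[OF rvY])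
  have hm: "(\<lambda>x. hist E B \<gamma> \<sigma> x i) \<in> measurable ?PX (count_space UNIV)"
    by (rule hist_meas) auto
  define Z where "Z = {p \<in> space (?PX \<Otimes>\<^sub>M ?PY). hist E B \<gamma> \<sigma> (fst p) i \<in> H \<and>
     Qc (hist E B \<gamma> \<sigma> (fst p) i) (\<lambda>u. snd p (u, i))}"
  have Zs: "Z \<in> sets (?PX \<Otimes>\<^sub>M ?PY)"
  proof -
    have "(\<lambda>p. (\<lambda>h p. h \<in> H \<and> Qc h (\<lambda>u. snd p (u, i))) (hist E B \<gamma> \<sigma> (fst p) i) p)
        \<in> measurable (?PX \<Otimes>\<^sub>M ?PY) (count_space UNIV)"
    proof (rule measurable_compose_countable'[where I=UNIV and f="\<lambda>h p. h \<in> H \<and> Qc h (\<lambda>u. snd p (u, i))" and g="\<lambda>p. hist E B \<gamma> \<sigma> (fst p) i"])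
      show "(\<lambda>p. hist E B \<gamma> \<sigma> (fst p) i) \<in> measurable (?PX \<Otimes>\<^sub>M ?PY) (count_space UNIV)"
        by (rule measurable_compose[OF measurable_fst hm])
      fix h
      have "(\<lambda>p. Qc h (\<lambda>u. snd p (u, i))) \<in> measurable (?PX \<Otimes>\<^sub>M ?PY) (count_space UNIV)"
        by (rule measurable_compose[OF measurable_snd Qm[of h]])
      then show "(\<lambda>p. h \<in> H \<and> Qc h (\<lambda>u. snd p (u, i))) \<in> measurable (?PX \<Otimes>\<^sub>M ?PY) (count_space UNIV)"
        by (cases "h \<in> H") auto
    qed auto
    then show ?thesis unfolding Z_def by (simp add: pred_def)
  qed
  have "emeasure ?M {\<omega> \<in> space ?M. ?h \<omega> \<in> H \<and> Qc (?h \<omega>) (\<lambda>u. \<omega> (u, i))}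
      = emeasure ?M ((\<lambda>x. (?X x, ?Y x)) -` Z \<inter> space ?M)"
  proof -
    have "?h \<omega> = hist E B \<gamma> \<sigma> (?X \<omega>) i" for \<omega> by (rule hist_cong) auto
    moreover have "(?X \<omega>, ?Y \<omega>) \<in> space (?PX \<Otimes>\<^sub>M ?PY)" if "\<omega> \<in> space ?M" for \<omega>
      using measurable_space[OF measurable_Pair[OF rvX rvY] that] .
    ultimately show ?thesis unfolding Z_def by (intro arg_cong[where f="emeasure ?M"]) auto
  qed
  also have "\<dots> = emeasure (distr ?M (?PX \<Otimes>\<^sub>M ?PY) (\<lambda>x. (?X x, ?Y x))) Z"
    by (rule emeasure_distr[symmetric, OF measurable_Pair[OF rvX rvY] Zs])
  also have "\<dots> = emeasure (?DX \<Otimes>\<^sub>M ?DY) Z" by (simp add: joint)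
  also have "\<dots> = (\<integral>\<^sup>+x. emeasure ?DY (Pair x -` Z) \<partial>?DX)"
    by (rule DY.emeasure_pair_measure_alt) (use Zs in simp)
  also have "\<dots> \<ge> (\<integral>\<^sup>+x. ennreal q * indicator {x \<in> space ?PX. hist E B \<gamma> \<sigma> x i \<in> H} x \<partial>?DX)"
  proof (rule nn_integral_mono)
    fix x assume x: "x \<in> space ?DX"
    show "ennreal q * indicator {x \<in> space ?PX. hist E B \<gamma> \<sigma> x i \<in> H} x \<le> emeasure ?DY (Pair x -` Z)"
    proof (cases "hist E B \<gamma> \<sigma> x i \<in> H")
      case True
      let ?S = "{y \<in> space ?PY. Qc (hist E B \<gamma> \<sigma> x i) (\<lambda>u. y (u, i))}"
      have "Pair x -` Z = ?S" using x True unfolding Z_def by (auto simp: space_pair_measure)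
      moreover have Ss: "?S \<in> sets ?PY" using Qm[of "hist E B \<gamma> \<sigma> x i"] by (simp add: pred_def)
      moreover have "emeasure ?DY ?S = emeasure ?M {\<omega> \<in> space ?M. Qc (hist E B \<gamma> \<sigma> x i) (\<lambda>u. \<omega> (u, i))}"
        using measurable_space[OF rvY] by (subst emeasure_distr[OF rvY Ss]) (auto intro!: arg_cong[where f="emeasure ?M"])
      ultimately show ?thesis using Qb[OF True] by (auto simp: indicator_def)
    qed (simp add: indicator_def)
  qed
  also have "(\<integral>\<^sup>+x. ennreal q * indicator {x \<in> space ?PX. hist E B \<gamma> \<sigma> x i \<in> H} x \<partial>?DX)
     = ennreal q * emeasure ?DX {x \<in> space ?PX. hist E B \<gamma> \<sigma> x i \<in> H}"
  proof (rule nn_integral_cmult_indicator)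
    show "{x \<in> space ?PX. hist E B \<gamma> \<sigma> x i \<in> H} \<in> sets ?DX"
      using hm by (simp add: pred_def[symmetric]) measurable
  qed
  also have "emeasure ?DX {x \<in> space ?PX. hist E B \<gamma> \<sigma> x i \<in> H} = emeasure ?M {\<omega> \<in> space ?M. ?h \<omega> \<in> H}"
  proof (subst emeasure_distr[OF rvX])
    show "{x \<in> space ?PX. hist E B \<gamma> \<sigma> x i \<in> H} \<in> sets ?PX"
      using hm by measurable
    have "?h \<omega> = hist E B \<gamma> \<sigma> (?X \<omega>) i" for \<omega> by (rule hist_cong) auto
    then show "emeasure ?M (?X -` {x \<in> space ?PX. hist E B \<gamma> \<sigma> x i \<in> H} \<inter> space ?M) = emeasure ?M {\<omega> \<in> space ?M. ?h \<omega> \<in> H}"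
      using measurable_space[OF rvX] by (intro arg_cong[where f="emeasure ?M"]) auto
  qed
  finally show ?thesis by simp
qed


lemma U_lt: "0 \<le> a \<Longrightarrow> a \<le> 1 \<Longrightarrow> emeasure U {..<a} = ennreal a"
proof -
  assume "0 \<le> a" "a \<le> 1"
  then have "{0..1} \<inter> {..<a} = {0..<a::real}" by auto
  then show ?thesis using \<open>0 \<le> a\<close> by (simp add: emeasure_uniform_measure divide_ennreal_def)
qed

lemma U_ge: "0 \<le> b \<Longrightarrow> b \<le> 1 \<Longrightarrow> emeasure U {b..} = ennreal (1 - b)"
  by (simp add: emeasure_uniform_measure divide_ennreal_def)


lemma space_PiU: "space (PiM I (\<lambda>_. U)) = PiE I (\<lambda>_. UNIV)"
  by (simp add: space_PiM)

lemma space_coin: "space (PiM UNIV (\<lambda>_. U)) = UNIV"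
  by (auto simp: space_PiU PiE_def extensional_def)

lemma coin_event:
  fixes S :: "'a::finite set" and u :: 'a
  assumes uS: "u \<notin> S" and a: "0 \<le> a" "a \<le> 1" and b: "\<forall>v\<in>S. 0 \<le> b v \<and> b v \<le> 1"
  shows "emeasure coin_space {\<omega> \<in> space coin_space. \<omega> (u, i) < a \<and> (\<forall>v\<in>S. b v \<le> \<omega> (v, i))}
     = ennreal (a * (\<Prod>v\<in>S. (1 - b v)))"
proof -
  define K where "K = insert (u, i) ((\<lambda>v. (v, i)) ` S)"
  define A where "A k = (if k = (u, i) then {..<a} else {b (fst k)..})" for k :: "'a \<times> nat"
  have "{\<omega> \<in> space coin_space. \<omega> (u, i) < a \<and> (\<forall>v\<in>S. b v \<le> \<omega> (v, i))}
      = prod_emb UNIV (\<lambda>_. U) K (Pi\<^sub>E K A)"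
    unfolding coin_space_eq prod_emb_def K_def A_def using uS
    by (auto simp: restrict_PiE_iff space_coin Pi_iff) (metis atLeast_iff fst_conv)
  moreover have "emeasure (PiM UNIV (\<lambda>_. U)) (prod_emb UNIV (\<lambda>_. U) K (Pi\<^sub>E K A)) = (\<Prod>k\<in>K. emeasure U (A k))"
    by (rule emeasure_PiM_emb) (auto simp: prob_U K_def A_def)
  moreover have "(\<Prod>k\<in>K. emeasure U (A k)) = emeasure U {..<a} * (\<Prod>v\<in>S. emeasure U {b v..})"
  proof -
    have "(u, i) \<notin> (\<lambda>v. (v, i)) ` S" using uS by auto
    then have "(\<Prod>k\<in>K. emeasure U (A k)) = emeasure U (A (u, i)) * (\<Prod>k\<in>(\<lambda>v. (v, i)) ` S. emeasure U (A k))"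
      unfolding K_def by (simp add: prod.insert)
    also have "(\<Prod>k\<in>(\<lambda>v. (v, i)) ` S. emeasure U (A k)) = (\<Prod>v\<in>S. emeasure U (A (v, i)))"
      by (subst prod.reindex) (auto simp: inj_on_def)
    also have "(\<Prod>v\<in>S. emeasure U (A (v, i))) = (\<Prod>v\<in>S. emeasure U {b v..})"
      using uS by (intro prod.cong) (auto simp: A_def)
    finally show ?thesis by (simp add: A_def)
  qed
  moreover have "(\<Prod>v\<in>S. emeasure U {b v..}) = (\<Prod>v\<in>S. ennreal (1 - b v))"
    using b by (intro prod.cong) (auto simp del: emeasure_uniform_measure simp: U_ge)
  moreover have "(\<Prod>v\<in>S. ennreal (1 - b v)) = ennreal (\<Prod>v\<in>S. (1 - b v))"
    using b by (intro prod_ennreal) auto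
  moreover have "0 \<le> (\<Prod>v\<in>S. (1 - b v))" using b by (intro prod_nonneg) auto
  moreover have "ennreal a * ennreal (\<Prod>v\<in>S. (1 - b v)) = ennreal (a * (\<Prod>v\<in>S. (1 - b v)))"
    using a(1) calculation(6) by (simp only: ennreal_mult)
  ultimately show ?thesis unfolding coin_space_eq using U_lt[OF a] by (simp only:)
qed

lemma l1: "real d > 0 \<Longrightarrow> (1 + 1 / real d) ^ d \<le> exp (1 / real d) ^ d"
proof -
  assume dpos: "real d > 0"
  have "1 + 1 / real d \<le> exp (1 / real d)" by (rule exp_ge_add_one_self)
  moreover have "0 \<le> 1 + 1 / real d" using dpos by simp
  ultimately show "(1 + 1 / real d) ^ d \<le> exp (1 / real d) ^ d"
    by (rule power_mono)
qed
lemma l2: "real d > 0 \<Longrightarrow> exp (1 / real d) ^ d = exp 1"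
proof -
  assume dpos: "real d > 0"
  have "exp (1 / real d) ^ d = exp (real d * (1 / real d))" by (rule exp_of_nat_mult[symmetric])
  also have "real d * (1 / real d) = 1" using dpos by simp
  finally show ?thesis .
qed
lemma l3: "0 < (1 + 1 / real d) ^ d"
proof -
  have "0 < 1 + 1 / real d" by (simp add: add_pos_nonneg)
  then show ?thesis by (rule zero_less_power)
qed
lemma l4: "exp (-1) = 1 / exp (1::real)" by (metis exp_minus inverse_eq_divide)
lemma l5: "(x::real) \<le> exp 1 \<Longrightarrow> 0 < x \<Longrightarrow> 1 / exp 1 \<le> 1 / x"
  by (rule divide_left_mono) auto
lemma l6: "1 / (1 + 1 / real d) ^ d = (real d / (real d + 1)) ^ d" if "real d > 0"
proof -
  have "real d / (real d + 1) = 1 / (1 + 1 / real d)" using that by (simp add: divide_simps)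
  then show ?thesis by (simp add: power_one_over)
qed

lemma pow_ge: "exp (-1) \<le> (real d / (real d + 1)) ^ d"
proof (cases "d = 0")
  case True then show ?thesis by simp
next
  case False
  then have dpos: "real d > 0" by simp
  have le: "(1 + 1 / real d) ^ d \<le> exp 1" using l1[OF dpos] l2[OF dpos] by simp
  have "exp (-1) = 1 / exp (1::real)" by (rule l4)
  also have "\<dots> \<le> 1 / (1 + 1 / real d) ^ d" by (rule l5[OF le l3])
  also have "\<dots> = (real d / (real d + 1)) ^ d" by (rule l6[OF dpos])
  finally show ?thesis .
qed

lemma r_le: "real d / (real d + 1) = 1 - 1 / (1 + real d)"
  by (simp add: divide_simps)

lemma key_ineq:
  fixes S :: "'b set" and d D :: nat and a :: real
  assumes fin: "finite S" and card: "card S \<le> d" and bnd: "\<forall>v\<in>S. 0 \<le> b v \<and> b v \<le> 1 / (1 + real d)"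
    and a: "1 / (real D + 1) \<le> a"
  shows "1 / ((real D + 1) * exp 1) \<le> a * (\<Prod>v\<in>S. (1 - b v))"
proof -
  let ?r = "real d / (real d + 1)"
  have r01: "0 \<le> ?r" "?r \<le> 1" by auto
  have "?r ^ d \<le> ?r ^ card S" by (rule power_decreasing[OF card r01])
  also have "\<dots> = (\<Prod>v\<in>S. ?r)" by simp
  also have "\<dots> \<le> (\<Prod>v\<in>S. (1 - b v))"
  proof (rule prod_mono)
    fix v assume "v \<in> S"
    then have "b v \<le> 1 / (1 + real d)" by (simp add: bnd)
    then show "0 \<le> ?r \<and> ?r \<le> 1 - b v" unfolding r_le by auto
  qed
  finally have p: "exp (-1) \<le> (\<Prod>v\<in>S. (1 - b v))" using pow_ge[of d] by linarith
  have "1 / ((real D + 1) * exp 1) = 1 / (real D + 1) * (1 / exp 1)" by simp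
  also have "\<dots> = 1 / (real D + 1) * exp (-1)" by (simp only: l4)
  also have "\<dots> \<le> a * (\<Prod>v\<in>S. (1 - b v))"
  proof (rule mult_mono)
    have "0 \<le> 1 / (real D + 1)" by simp
    then show "0 \<le> a" using a by linarith
    show "1 / (real D + 1) \<le> a" using a .
    show "exp (-1) \<le> (\<Prod>v\<in>S. (1 - b v))" using p .
    show "0 \<le> exp (-1::real)" by simp
  qed
  finally show ?thesis .
qed


lemma pred_hist: "Measurable.pred coin_space (\<lambda>\<omega>. P (hist E B \<gamma> \<sigma> \<omega> i))"
proof -
  have "(\<lambda>\<omega>. hist E B \<gamma> \<sigma> \<omega> i) \<in> measurable coin_space (count_space UNIV)"
    unfolding coin_space_eq by (rule hist_meas) auto
  then show ?thesis by (rule measurable_compose) simp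
qed

lemma comp_borel:
  assumes "k \<in> J"
  shows "(\<lambda>y. y k) \<in> borel_measurable (PiM J (\<lambda>_. U))"
proof -
  have "(\<lambda>y. y k) \<in> measurable (PiM J (\<lambda>_. U)) U"
    using assms by (intro measurable_component_singleton) auto
  moreover have "measurable (PiM J (\<lambda>_. U)) U = measurable (PiM J (\<lambda>_. U)) (borel::real measure)"
    by (rule measurable_cong_sets) auto
  ultimately show ?thesis by simp
qed

lemma Qm_gen:
  fixes S :: "'a::finite set"
  assumes "UNIV \<times> {i} \<subseteq> J"
  shows "Measurable.pred (PiM J (\<lambda>_. U)) (\<lambda>y. y (u, i) < a \<and> (\<forall>v. v \<in> S \<longrightarrow> b v \<le> y (v, i)))"
proof -
  have m: "(\<lambda>y. y (v, i)) \<in> borel_measurable (PiM J (\<lambda>_. U))" for v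
    using assms by (intro comp_borel) auto
  have p1: "Measurable.pred (PiM J (\<lambda>_. U)) (\<lambda>y. y (u, i) < a)" using m[of u] by measurable
  have p2: "Measurable.pred (PiM J (\<lambda>_. U)) (\<lambda>y. v \<in> S \<longrightarrow> b v \<le> y (v, i))" for v
    using m[of v] by measurable
  have p3: "Measurable.pred (PiM J (\<lambda>_. U)) (\<lambda>y. \<forall>v. v \<in> S \<longrightarrow> b v \<le> y (v, i))"
    using p2 by (intro pred_intros_countable) auto
  show ?thesis using p1 p3 by (intro pred_intros_logic)
qed

lemma round_exists:
  fixes c :: "nat \<Rightarrow> 'a::finite cfg"
  assumes fair: "fair_exec E B c act"
  shows "\<exists>b. round_end E B c act a b"
proof -
  have "\<forall>u. \<exists>m\<ge>a. \<not> activable E B (c m) u \<or> u \<in> act m"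
    using fair unfolding fair_exec_def by blast
  then obtain m where m: "\<And>u. m u \<ge> a \<and> (\<not> activable E B (c (m u)) u \<or> u \<in> act (m u))"
    by metis
  define b0 where "b0 = Suc (Max (range m))"
  have mb: "m u < b0" for u unfolding b0_def by (simp add: le_imp_less_Suc)
  have rc: "round_cond E B c act a b0"
    unfolding round_cond_def
  proof
    fix u
    show "(\<exists>i\<in>{a..<b0}. u \<in> act i) \<or> (\<exists>i\<in>{a..b0}. \<not> activable E B (c i) u)"
      using m[of u] mb[of u] by (metis atLeastAtMost_iff atLeastLessThan_iff less_imp_le)
  qed
  have ab0: "a < b0" using m[of undefined] mb[of undefined] by linarith
  define b where "b = (LEAST b. a < b \<and> round_cond E B c act a b)"
  have b: "a < b \<and> round_cond E B c act a b"
    unfolding b_def by (rule LeastI[of _ b0]) (use rc ab0 in auto)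
  have "\<not> round_cond E B c act a b'" if "a < b'" "b' < b" for b'
    using not_less_Least[of b' "\<lambda>b. a < b \<and> round_cond E B c act a b"] that unfolding b_def by auto
  then show ?thesis using b unfolding round_end_def by blast
qed


lemma pm_act[measurable]: "Measurable.pred coin_space (\<lambda>\<omega>. u \<in> act_seq E B \<gamma> \<sigma> \<omega> i)"
  unfolding act_seq_def by (rule pred_hist)

lemma pm_activable[measurable]: "Measurable.pred coin_space (\<lambda>\<omega>. activable E B (cfg_seq E B \<gamma> \<sigma> \<omega> i) u)"
  unfolding cfg_seq_def by (rule pred_hist)

lemma pm_grow[measurable]: "Measurable.pred coin_space (\<lambda>\<omega>. X \<subset> Iset E B (cfg_seq E B \<gamma> \<sigma> \<omega> i))"
  unfolding cfg_seq_def by (rule pred_hist)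

lemma good_meas: "Measurable.pred coin_space (\<lambda>\<omega>. \<exists>b1 b2.
              round_end E B (cfg_seq E B \<gamma> \<sigma> \<omega>) (act_seq E B \<gamma> \<sigma> \<omega>) 0 b1 \<and>
              round_end E B (cfg_seq E B \<gamma> \<sigma> \<omega>) (act_seq E B \<gamma> \<sigma> \<omega>) b1 b2 \<and>
              Iset E B \<gamma> \<subset> Iset E B (cfg_seq E B \<gamma> \<sigma> \<omega> b2))"
  unfolding round_end_def round_cond_def by measurable


lemma cp_bounds: "0 \<le> cand_prob E g v \<and> cand_prob E g v \<le> 1"
  unfolding cand_prob_def by auto

theorem mainTheorem10:
  fixes E :: "'a::finite \<Rightarrow> 'a \<Rightarrow> bool" and B :: "'a set"
    and \<gamma> :: "'a cfg" and \<sigma> :: "'a strategy"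
  assumes sym: "\<forall>u v. E u v \<longleftrightarrow> E v u"
    and irrefl: "\<forall>u. \<not> E u u"
    and valid: "valid_strategy E B \<sigma>"
    and fair: "\<forall>\<omega>\<in>space coin_space.
                 fair_exec E B (cfg_seq E B \<gamma> \<sigma> \<omega>) (act_seq E B \<gamma> \<sigma> \<omega>)"
    and stab: "deg_stabilized E B \<gamma>"
    and notmax: "\<not> maximal_indep_in E (Vset E B 2 \<union> Iset E B \<gamma>) (Iset E B \<gamma>)"
  shows "measure coin_space
           {\<omega> \<in> space coin_space. \<exists>b1 b2.
              round_end E B (cfg_seq E B \<gamma> \<sigma> \<omega>) (act_seq E B \<gamma> \<sigma> \<omega>) 0 b1 \<and>
              round_end E B (cfg_seq E B \<gamma> \<sigma> \<omega>) (act_seq E B \<gamma> \<sigma> \<omega>) b1 b2 \<and>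
              Iset E B \<gamma> \<subset> Iset E B (cfg_seq E B \<gamma> \<sigma> \<omega> b2)}
         \<ge> 1 / ((real (maxdeg E) + 1) * exp 1)"
proof -
  let ?M = "coin_space :: ('a \<times> nat \<Rightarrow> real) measure"
  interpret P: prob_space ?M by (rule prob_coin)
  let ?I = "Iset E B \<gamma>"
  have indepI: "independent_in E (Vset E B 2 \<union> ?I) ?I"
    unfolding independent_in_def Iset_def by auto
  then obtain w where w2: "w \<in> Vset E B 2" and wnI: "w \<notin> ?I" and wI: "\<forall>u\<in>?I. \<not> E w u"
    using notmax unfolding maximal_indep_in_def independent_in_def by auto
  define N where "N = {u. u = w \<or> E w u}"
  have NI: "u \<notin> ?I" if "u \<in> N" for u using that wnI wI unfolding N_def by auto
  have NV: "u \<in> Vset E B 1" if "u \<in> N" for u using V2_nbr[OF w2] that unfolding N_def by auto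
  have NB: "u \<notin> B" if "u \<in> N" for u using V1_notB[OF NV[OF that]] .

  have run: "run E B (cfg_seq E B \<gamma> \<sigma> \<omega>) (act_seq E B \<gamma> \<sigma> \<omega>)
      (\<lambda>i. snd (\<sigma> (hist E B \<gamma> \<sigma> \<omega> i))) (\<lambda>i u. \<omega> (u, i))" for \<omega>
  proof
    show "\<forall>u v. E u v = E v u" using sym .
    show "cfg_seq E B \<gamma> \<sigma> \<omega> (Suc i) = step E B (cfg_seq E B \<gamma> \<sigma> \<omega> i) (act_seq E B \<gamma> \<sigma> \<omega> i)
        (snd (\<sigma> (hist E B \<gamma> \<sigma> \<omega> i))) (\<lambda>u. \<omega> (u, i))" for i by (rule cfg_Suc)
    show "act_seq E B \<gamma> \<sigma> \<omega> i \<subseteq> {u. activable E B (cfg_seq E B \<gamma> \<sigma> \<omega> i) u}" for i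
      using valid hist_ne[of E B \<gamma> \<sigma> \<omega> i] unfolding valid_strategy_def act_seq_def cfg_seq_def by blast
    show "deg_stabilized E B (cfg_seq E B \<gamma> \<sigma> \<omega> 0)" using stab by (simp add: cfg_0)
  qed

  define RiskyH where "RiskyH h \<longleftrightarrow> (\<exists>u\<in>N. u \<in> fst (\<sigma> h) \<and> cand_en E (last h) u)" for h
  define H where "H i = {h. RiskyH h \<and> (\<forall>j<i. \<not> RiskyH (take (Suc j) h)) \<and> deg_stabilized E B (last h)}" for i
  define sel where "sel h = (SOME u. u \<in> N \<and> u \<in> fst (\<sigma> h) \<and> cand_en E (last h) u)" for h
  define Ss where "Ss h = {v. E (sel h) v \<and> v \<in> fst (\<sigma> h) \<and> cand_en E (last h) v}" for h
  define Qc where "Qc h z \<longleftrightarrow> z (sel h) < cand_prob E (last h) (sel h) \<and>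
      (\<forall>v. v \<in> Ss h \<longrightarrow> cand_prob E (last h) v \<le> z v)" for h and z :: "'a \<Rightarrow> real"
  define q where "q = 1 / ((real (maxdeg E) + 1) * exp 1)"
  define F where "F i = {\<omega> \<in> space ?M. hist E B \<gamma> \<sigma> \<omega> i \<in> H i}" for i
  define G where "G i = {\<omega> \<in> space ?M. hist E B \<gamma> \<sigma> \<omega> i \<in> H i \<and> Qc (hist E B \<gamma> \<sigma> \<omega> i) (\<lambda>u. \<omega> (u, i))}" for i
  define NoR where "NoR = {\<omega> \<in> space ?M. \<forall>i. \<not> RiskyH (hist E B \<gamma> \<sigma> \<omega> i)}"
  define Good where "Good = {\<omega> \<in> space coin_space. \<exists>b1 b2.
              round_end E B (cfg_seq E B \<gamma> \<sigma> \<omega>) (act_seq E B \<gamma> \<sigma> \<omega>) 0 b1 \<and>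
              round_end E B (cfg_seq E B \<gamma> \<sigma> \<omega>) (act_seq E B \<gamma> \<sigma> \<omega>) b1 b2 \<and>
              Iset E B \<gamma> \<subset> Iset E B (cfg_seq E B \<gamma> \<sigma> \<omega> b2)}"

  have risky_iff: "RiskyH (hist E B \<gamma> \<sigma> \<omega> i) \<longleftrightarrow>
      (\<exists>u. (u = w \<or> E w u) \<and> u \<in> act_seq E B \<gamma> \<sigma> \<omega> i \<and> cand_en E (cfg_seq E B \<gamma> \<sigma> \<omega> i) u)" for \<omega> i
    unfolding RiskyH_def N_def act_seq_def cfg_seq_def by auto

  have sel_ok: "sel h \<in> N \<and> sel h \<in> fst (\<sigma> h) \<and> cand_en E (last h) (sel h)" if "RiskyH h" for h
    using that unfolding RiskyH_def sel_def by (metis (mono_tags, lifting) someI_ex)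

  have good_of: "\<omega> \<in> Good" if \<omega>: "\<omega> \<in> space ?M"
    and alt: "\<And>b2. (\<forall>j<b2. \<not> RiskyH (hist E B \<gamma> \<sigma> \<omega> j)) \<or>
                 (\<exists>i<b2. \<exists>u\<in>N. u \<in> Iset E B (cfg_seq E B \<gamma> \<sigma> \<omega> (Suc i)))" for \<omega>
  proof -
    interpret R: run E B "cfg_seq E B \<gamma> \<sigma> \<omega>" "act_seq E B \<gamma> \<sigma> \<omega>"
      "\<lambda>i. snd (\<sigma> (hist E B \<gamma> \<sigma> \<omega> i))" "\<lambda>i u. \<omega> (u, i)" by (rule run)
    have fe: "fair_exec E B (cfg_seq E B \<gamma> \<sigma> \<omega>) (act_seq E B \<gamma> \<sigma> \<omega>)" using fair \<omega> by blast
    obtain b1 where b1: "round_end E B (cfg_seq E B \<gamma> \<sigma> \<omega>) (act_seq E B \<gamma> \<sigma> \<omega>) 0 b1"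
      using round_exists[OF fe] by blast
    obtain b2 where b2: "round_end E B (cfg_seq E B \<gamma> \<sigma> \<omega>) (act_seq E B \<gamma> \<sigma> \<omega>) b1 b2"
      using round_exists[OF fe] by blast
    have sub: "?I \<subseteq> Iset E B (cfg_seq E B \<gamma> \<sigma> \<omega> b2)"
      using R.Iset_mono[of 0 b2] by (auto simp: cfg_0)
    have "\<exists>u\<in>N. u \<in> Iset E B (cfg_seq E B \<gamma> \<sigma> \<omega> b2)"
      using alt[of b2]
    proof
      assume nr: "\<forall>j<b2. \<not> RiskyH (hist E B \<gamma> \<sigma> \<omega> j)"
      have "\<exists>j\<le>b2. \<exists>u. (u = w \<or> E w u) \<and> u \<in> Iset E B (cfg_seq E B \<gamma> \<sigma> \<omega> j)"
      proof (rule R.det_growth[OF w2])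
        show "round_cond E B (cfg_seq E B \<gamma> \<sigma> \<omega>) (act_seq E B \<gamma> \<sigma> \<omega>) 0 b1"
          using b1 unfolding round_end_def by auto
        show "round_cond E B (cfg_seq E B \<gamma> \<sigma> \<omega>) (act_seq E B \<gamma> \<sigma> \<omega>) b1 b2"
          using b2 unfolding round_end_def by auto
        show "b1 \<le> b2" using b2 unfolding round_end_def by auto
        show "\<forall>i<b2. \<forall>u. (u = w \<or> E w u) \<longrightarrow> u \<in> act_seq E B \<gamma> \<sigma> \<omega> i \<longrightarrow> \<not> cand_en E (cfg_seq E B \<gamma> \<sigma> \<omega> i) u"
          using nr risky_iff by blast
      qed
      then show ?thesis using R.Iset_mono unfolding N_def by blast
    next
      assume "\<exists>i<b2. \<exists>u\<in>N. u \<in> Iset E B (cfg_seq E B \<gamma> \<sigma> \<omega> (Suc i))"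
      then show ?thesis using R.Iset_mono by (meson Suc_leI)
    qed
    then have "?I \<subset> Iset E B (cfg_seq E B \<gamma> \<sigma> \<omega> b2)" using sub NI by blast
    then show ?thesis unfolding Good_def using \<omega> b1 b2 by blast
  qed

  have NoR_Good: "NoR \<subseteq> Good"
    using good_of unfolding NoR_def by blast

  have G_Good: "G i \<subseteq> Good" for i
  proof
    fix \<omega> assume \<omega>G: "\<omega> \<in> G i"
    interpret R: run E B "cfg_seq E B \<gamma> \<sigma> \<omega>" "act_seq E B \<gamma> \<sigma> \<omega>"
      "\<lambda>i. snd (\<sigma> (hist E B \<gamma> \<sigma> \<omega> i))" "\<lambda>i u. \<omega> (u, i)" by (rule run)
    let ?h = "hist E B \<gamma> \<sigma> \<omega> i"
    have \<omega>: "\<omega> \<in> space ?M" and hH: "?h \<in> H i" and Q: "Qc ?h (\<lambda>u. \<omega> (u, i))"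
      using \<omega>G unfolding G_def by auto
    have rk: "RiskyH ?h" using hH unfolding H_def by auto
    let ?u = "sel ?h"
    have u: "?u \<in> N" "?u \<in> act_seq E B \<gamma> \<sigma> \<omega> i" "cand_en E (cfg_seq E B \<gamma> \<sigma> \<omega> i) ?u"
      using sel_ok[OF rk] unfolding act_seq_def cfg_seq_def by auto
    have succ: "?u \<in> Iset E B (cfg_seq E B \<gamma> \<sigma> \<omega> (Suc i))"
      unfolding cfg_Suc
    proof (rule success_step[OF sym R.stab NV[OF u(1)] u(2) u(3)])
      show "\<omega> (?u, i) < cand_prob E (cfg_seq E B \<gamma> \<sigma> \<omega> i) ?u"
        using Q unfolding Qc_def cfg_seq_def by auto
      show "\<forall>v. E ?u v \<and> v \<in> act_seq E B \<gamma> \<sigma> \<omega> i \<and> cand_en E (cfg_seq E B \<gamma> \<sigma> \<omega> i) v \<longrightarrow>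
          \<not> \<omega> (v, i) < cand_prob E (cfg_seq E B \<gamma> \<sigma> \<omega> i) v"
        using Q unfolding Qc_def Ss_def cfg_seq_def act_seq_def by force
    qed
    show "\<omega> \<in> Good"
    proof (rule good_of[OF \<omega>])
      fix b2
      show "(\<forall>j<b2. \<not> RiskyH (hist E B \<gamma> \<sigma> \<omega> j)) \<or>
                 (\<exists>i<b2. \<exists>u\<in>N. u \<in> Iset E B (cfg_seq E B \<gamma> \<sigma> \<omega> (Suc i)))"
      proof (cases "i < b2")
        case True then show ?thesis using succ u(1) by blast
      next
        case False
        have "\<not> RiskyH (hist E B \<gamma> \<sigma> \<omega> j)" if "j < b2" for j
        proof -
          have "j < i" using False that by simp
          then show ?thesis using hH hist_take[of j i E B \<gamma> \<sigma> \<omega>] unfolding H_def by auto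
        qed
        then show ?thesis by blast
      qed
    qed
  qed

  have hmeas: "(\<lambda>\<omega>. hist E B \<gamma> \<sigma> \<omega> i) \<in> measurable ?M (count_space UNIV)" for i
    unfolding coin_space_eq by (rule hist_meas) auto
  have F_s: "F i \<in> sets ?M" for i
  proof -
    have "Measurable.pred ?M (\<lambda>\<omega>. hist E B \<gamma> \<sigma> \<omega> i \<in> H i)"
      by (rule measurable_compose[OF hmeas]) simp
    then show ?thesis unfolding F_def by (simp add: pred_def)
  qed
  have Qpred: "Measurable.pred (PiM J (\<lambda>_. U)) (\<lambda>\<omega>. Qc h (\<lambda>u. \<omega> (u, i)))" if "UNIV \<times> {i} \<subseteq> J" for h i J
    unfolding Qc_def using Qm_gen[OF that, of "sel h" "cand_prob E (last h) (sel h)" "Ss h" "cand_prob E (last h)"]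
    by simp
  have G_s: "G i \<in> sets ?M" for i
  proof -
    have "(\<lambda>\<omega>. (\<lambda>h \<omega>. h \<in> H i \<and> Qc h (\<lambda>u. \<omega> (u, i))) (hist E B \<gamma> \<sigma> \<omega> i) \<omega>) \<in> measurable ?M (count_space UNIV)"
    proof (rule measurable_compose_countable'[where I=UNIV and f="\<lambda>h \<omega>. h \<in> H i \<and> Qc h (\<lambda>u. \<omega> (u, i))"
          and g="\<lambda>\<omega>. hist E B \<gamma> \<sigma> \<omega> i", OF _ hmeas])
      fix h
      have "Measurable.pred ?M (\<lambda>\<omega>. Qc h (\<lambda>u. \<omega> (u, i)))"
        unfolding coin_space_eq by (rule Qpred) auto
      then show "Measurable.pred ?M (\<lambda>\<omega>. h \<in> H i \<and> Qc h (\<lambda>u. \<omega> (u, i)))"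
        by (cases "h \<in> H i") auto
    qed simp
    then show ?thesis unfolding G_def by (simp add: pred_def)
  qed
  have NoR_s: "NoR \<in> sets ?M"
  proof -
    have "Measurable.pred ?M (\<lambda>\<omega>. \<not> RiskyH (hist E B \<gamma> \<sigma> \<omega> i))" for i
      by (rule measurable_compose[OF hmeas]) simp
    then have "Measurable.pred ?M (\<lambda>\<omega>. \<forall>i. \<not> RiskyH (hist E B \<gamma> \<sigma> \<omega> i))"
      by (intro pred_intros_countable) auto
    then show ?thesis unfolding NoR_def by (simp add: pred_def)
  qed
  have Good_s: "Good \<in> sets ?M"
    using good_meas[of E B \<gamma> \<sigma>] unfolding Good_def by (simp add: pred_def)

  have GF: "G i \<subseteq> F i" for i unfolding G_def F_def by auto
  have FF: "F i \<inter> F j = {}" if "i < j" for i j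
  proof (rule ccontr)
    assume "F i \<inter> F j \<noteq> {}"
    then obtain \<omega> where "\<omega> \<in> F i" "\<omega> \<in> F j" by auto
    then have a: "RiskyH (hist E B \<gamma> \<sigma> \<omega> i)" and b: "\<not> RiskyH (take (Suc i) (hist E B \<gamma> \<sigma> \<omega> j))"
      using that unfolding F_def H_def by auto
    show False using a b hist_take[of i j E B \<gamma> \<sigma> \<omega>] that by simp
  qed
  have disjF: "disjoint_family F"
    unfolding disjoint_family_on_def
    by (metis FF inf_commute linorder_neqE_nat)
  have disjG: "disjoint_family G"
    using disjF GF unfolding disjoint_family_on_def by blast
  have NoRF: "NoR \<inter> (\<Union>i. F i) = {}"
    unfolding NoR_def F_def H_def by auto
  have NoRG: "NoR \<inter> (\<Union>i. G i) = {}" using NoRF GF by blast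
  have cover: "NoR \<union> (\<Union>i. F i) = space ?M"
  proof
    show "NoR \<union> (\<Union>i. F i) \<subseteq> space ?M" unfolding NoR_def F_def by auto
    show "space ?M \<subseteq> NoR \<union> (\<Union>i. F i)"
    proof
      fix \<omega> assume \<omega>: "\<omega> \<in> space ?M"
      show "\<omega> \<in> NoR \<union> (\<Union>i. F i)"
      proof (cases "\<forall>i. \<not> RiskyH (hist E B \<gamma> \<sigma> \<omega> i)")
        case True then show ?thesis using \<omega> unfolding NoR_def by auto
      next
        case False
        then have ex: "\<exists>i. RiskyH (hist E B \<gamma> \<sigma> \<omega> i)" by auto
        define i0 where "i0 = (LEAST i. RiskyH (hist E B \<gamma> \<sigma> \<omega> i))"
        have r0: "RiskyH (hist E B \<gamma> \<sigma> \<omega> i0)" unfolding i0_def using ex by (rule LeastI_ex)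
        have "\<not> RiskyH (take (Suc j) (hist E B \<gamma> \<sigma> \<omega> i0))" if "j < i0" for j
          using not_less_Least[of j "\<lambda>i. RiskyH (hist E B \<gamma> \<sigma> \<omega> i)"] that hist_take[of j i0 E B \<gamma> \<sigma> \<omega>]
          unfolding i0_def by auto
        moreover have "deg_stabilized E B (last (hist E B \<gamma> \<sigma> \<omega> i0))"
        proof -
          interpret R: run E B "cfg_seq E B \<gamma> \<sigma> \<omega>" "act_seq E B \<gamma> \<sigma> \<omega>"
            "\<lambda>i. snd (\<sigma> (hist E B \<gamma> \<sigma> \<omega> i))" "\<lambda>i u. \<omega> (u, i)" by (rule run)
          show ?thesis using R.stab[of i0] unfolding cfg_seq_def .
        qed
        ultimately have "\<omega> \<in> F i0" using r0 \<omega> unfolding F_def H_def by auto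
        then show ?thesis by auto
      qed
    qed
  qed

  have qnn: "0 \<le> q" unfolding q_def by simp
  have bound: "q * measure ?M (F i) \<le> measure ?M (G i)" for i
  proof -
    have "ennreal q * emeasure ?M (F i) \<le> emeasure ?M (G i)"
      unfolding F_def G_def
    proof (rule prob_core)
      show "Measurable.pred (PiM (UNIV \<times> {i}) (\<lambda>_. U)) (\<lambda>y. Qc h (\<lambda>u. y (u, i)))" for h
        by (rule Qpred) auto
      fix h assume hH: "h \<in> H i"
      have rk: "RiskyH h" and st: "deg_stabilized E B (last h)" using hH unfolding H_def by auto
      let ?u = "sel h"
      let ?g = "last h"
      have u: "?u \<in> N" "cand_en E ?g ?u" using sel_ok[OF rk] by auto
      have uB: "?u \<notin> B" using NB[OF u(1)] .
      have uS: "?u \<notin> Ss h" using irrefl unfolding Ss_def by auto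
      have fin_snd: "finite {snd ?g x | x. P x}" for P
        by (rule finite_subset[of _ "range (snd ?g)"]) auto
      have bnd: "\<forall>v\<in>Ss h. 0 \<le> cand_prob E ?g v \<and> cand_prob E ?g v \<le> 1 / (1 + real (deg E ?u))"
      proof
        fix v assume v: "v \<in> Ss h"
        then have Euv: "E v ?u" using sym unfolding Ss_def by auto
        have "deg E ?u = snd ?g ?u" using st uB unfolding deg_stabilized_def by auto
        also have "\<dots> \<le> Max {snd ?g x | x. x = v \<or> E v x}"
          by (rule Max_ge[OF fin_snd]) (use Euv in auto)
        finally have le: "real (deg E ?u) \<le> real (Max {snd ?g x | x. x = v \<or> E v x})" by simp
        have "1 / (1 + real (Max {snd ?g x | x. x = v \<or> E v x})) \<le> 1 / (1 + real (deg E ?u))"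
          by (rule divide_left_mono) (use le in auto)
        then show "0 \<le> cand_prob E ?g v \<and> cand_prob E ?g v \<le> 1 / (1 + real (deg E ?u))"
          unfolding cand_prob_def by simp
      qed
      have alow: "1 / (real (maxdeg E) + 1) \<le> cand_prob E ?g ?u"
      proof -
        have "Max {snd ?g x | x. x = ?u \<or> E ?u x} \<le> maxdeg E"
        proof (subst Max_le_iff[OF fin_snd])
          show "{snd ?g x | x. x = ?u \<or> E ?u x} \<noteq> {}" by auto
          show "\<forall>a\<in>{snd ?g x | x. x = ?u \<or> E ?u x}. a \<le> maxdeg E"
          proof -
            have xle: "snd ?g x \<le> maxdeg E" if x: "x = ?u \<or> E ?u x" for x
            proof -
              have "x \<notin> B" using x uB V1_nbr_notB[OF NV[OF u(1)]] by auto
              then have "snd ?g x = deg E x" using st unfolding deg_stabilized_def by auto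
              also have "\<dots> \<le> maxdeg E" unfolding maxdeg_def by (rule Max_ge) auto
              finally show "snd ?g x \<le> maxdeg E" .
            qed
            then show ?thesis by blast
          qed
        qed
        then have le: "real (Max {snd ?g x | x. x = ?u \<or> E ?u x}) \<le> real (maxdeg E)" by simp
        have "1 / (real (maxdeg E) + 1) \<le> 1 / (1 + real (Max {snd ?g x | x. x = ?u \<or> E ?u x}))"
          by (rule divide_left_mono) (use le in auto)
        then show ?thesis unfolding cand_prob_def by simp
      qed
      have card: "card (Ss h) \<le> deg E ?u"
        unfolding deg_def nbrs_def Ss_def by (rule card_mono) auto
      have "q \<le> cand_prob E ?g ?u * (\<Prod>v\<in>Ss h. (1 - cand_prob E ?g v))"
        unfolding q_def by (rule key_ineq[OF _ card bnd alow]) simp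
      moreover have "{\<omega> \<in> space ?M. Qc h (\<lambda>u. \<omega> (u, i))} =
          {\<omega> \<in> space ?M. \<omega> (?u, i) < cand_prob E ?g ?u \<and> (\<forall>v\<in>Ss h. cand_prob E ?g v \<le> \<omega> (v, i))}"
        unfolding Qc_def by auto
      moreover have "emeasure ?M {\<omega> \<in> space ?M. \<omega> (?u, i) < cand_prob E ?g ?u \<and> (\<forall>v\<in>Ss h. cand_prob E ?g v \<le> \<omega> (v, i))}
          = ennreal (cand_prob E ?g ?u * (\<Prod>v\<in>Ss h. (1 - cand_prob E ?g v)))"
        by (rule coin_event[OF uS]) (use cp_bounds[of E "last h"] in auto)
      ultimately show "ennreal q \<le> emeasure ?M {\<omega> \<in> space ?M. Qc h (\<lambda>u. \<omega> (u, i))}"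
        by (simp add: ennreal_leI)
    qed
    then have "ennreal (q * measure ?M (F i)) \<le> ennreal (measure ?M (G i))"
      using qnn by (simp add: P.emeasure_eq_measure ennreal_mult)
    then show ?thesis using qnn by (simp add: ennreal_le_iff)
  qed

  have sF: "(\<lambda>i. measure ?M (F i)) sums measure ?M (\<Union>i. F i)"
    by (rule P.finite_measure_UNION) (use F_s disjF in auto)
  have sG: "(\<lambda>i. measure ?M (G i)) sums measure ?M (\<Union>i. G i)"
    by (rule P.finite_measure_UNION) (use G_s disjG in auto)
  have UF_s: "(\<Union>i. F i) \<in> sets ?M" using F_s by auto
  have UG_s: "(\<Union>i. G i) \<in> sets ?M" using G_s by auto
  have m1: "measure ?M NoR + measure ?M (\<Union>i. F i) = 1"
    using P.finite_measure_Union[OF NoR_s UF_s NoRF] cover P.prob_space by simp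
  have m2: "measure ?M (NoR \<union> (\<Union>i. G i)) = measure ?M NoR + measure ?M (\<Union>i. G i)"
    by (rule P.finite_measure_Union[OF NoR_s UG_s NoRG])
  have m3: "q * measure ?M (\<Union>i. F i) \<le> measure ?M (\<Union>i. G i)"
    by (rule sums_le[OF _ sums_mult[OF sF] sG]) (use bound in auto)
  have m4: "measure ?M (NoR \<union> (\<Union>i. G i)) \<le> measure ?M Good"
    by (rule P.finite_measure_mono[OF _ Good_s]) (use NoR_Good G_Good in auto)
  have q1: "q \<le> 1"
  proof -
    have "1 \<le> exp (1::real)" by simp
    moreover have "1 \<le> real (maxdeg E) + 1" by simp
    ultimately have "1 * 1 \<le> (real (maxdeg E) + 1) * exp 1" by (intro mult_mono) auto
    then show ?thesis unfolding q_def by simp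
  qed
  have mN: "0 \<le> measure ?M NoR" by simp
  have "0 \<le> measure ?M NoR * (1 - q)" using mN q1 by simp
  then have qN: "q * measure ?M NoR \<le> measure ?M NoR" by (simp add: algebra_simps)
  have "measure ?M (\<Union>i. F i) = 1 - measure ?M NoR" using m1 by simp
  then have "q - q * measure ?M NoR \<le> measure ?M (\<Union>i. G i)" using m3 by (simp add: right_diff_distrib)
  then have "q \<le> measure ?M Good" using m2 m4 qN by linarith
  then show ?thesis unfolding q_def Good_def .
qed


end
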